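(* Let $Q^{(N)}(t)=\sqrt N\,(X^{(N)}(t)-\pi)$. If $\limsup_{N\to\infty}\mathbb E\big[\|Q^{(N)}(0)\|_2^2\big]<\infty$, then $$\limsup_{N\to\infty}\ \sup_{t\ge0}\ \mathbb E\big[\|Q^{(N)}(t)\|_2^2\big]<\infty .$$ Consequently, if $X^{(N)}(\infty)$ denotes a random vector distributed according to the (unique) stationary distribution of the Markov process $X^{(N)}$ and $Z^{(N)}(\infty)=\sqrt N\,(X^{(N)}(\infty)-\pi)$, then $\limsup_{N\to\infty}\mathbb E\big[\|Z^{(N)}(\infty)\|_2^2\big]<\infty$.
   Context: Model: fix integers $C\ge1$, $d\ge1$ and reals $\sigma>0$, $\beta\in\mathbb R$. For each $N\ge1$ (large enough that $\lambda^{(N)}:=\sigma-\beta/\sqrt N>0$) there are $N$ servers, each able to process at most $C$ jobs simultaneously. Jobs arrive according to a Poisson process of rate $N\lambda^{(N)}$. At each arrival, $d$ servers are sampled uniformly at random with replacement and the job is routed to the sampled server with the fewest jobs in progress (ties broken uniformly at random); if that server has $C$ jobs the job is lost, otherwise it starts service immediately. Service times are i.i.d. exponential with mean $1$ and all jobs at a server are processed in parallel (a server with $n$ jobs completes jobs at total rate $n$). $X^{(N)}_n(t)$ is the fraction of servers with at least $n$ jobs at time $t$, $0\le n\le C$; $X^{(N)}(t)$ takes values in $\mathbb U=\{u\in\mathbb R^{C+1}:1=u_0\ge\cdots\ge u_C\ge0\}$. $\|\cdot\|_2$ is the Euclidean norm. $\pi\in\mathbb U$ is the unique fixed point of the mean-field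 ODE $\frac{d}{dt}x_n=\sigma(x_{n-1}^d-x_n^d)-n(x_n-x_{n+1})$ ($1\le n\le C$, $x_0\equiv1$, $x_{C+1}\equiv0$), i.e. $\pi_0=1$, $\sigma(\pi_{n-1}^d-\pi_n^d)=n(\pi_n-\pi_{n+1})$ for $1\le n\le C$, $\pi_{C+1}=0$. *)

theory Defs
  imports "HOL-Analysis.Analysis"
begin

definition lam :: "real \<Rightarrow> real \<Rightarrow> nat \<Rightarrow> real" where
  "lam \<sigma> \<beta> N = \<sigma> - \<beta> / sqrt (real N)"

text \<open>State space of the N-th system: occupancy counts m n = number of servers with at
  least n jobs (0 <= n <= C), so that X^(N)_n = m n / N.  Entries beyond C are 0.\<close>
definition states :: "nat \<Rightarrow> nat \<Rightarrow> (nat \<Rightarrow> nat) set" where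
  "states C N = {m. m 0 = N \<and> (\<forall>n<C. m (Suc n) \<le> m n) \<and> (\<forall>n>C. m n = 0)}"

text \<open>Transition rate from state m to state m' of the CTMC X^(N) (power-of-d routing,
  capacity C, parallel exponential service).  An arrival is routed to a server with exactly
  n-1 jobs with probability x_{n-1}^d - x_n^d; a server with exactly n jobs completes a job
  at rate n.\<close>
definition rate :: "nat \<Rightarrow> nat \<Rightarrow> real \<Rightarrow> real \<Rightarrow> nat \<Rightarrow> (nat \<Rightarrow> nat) \<Rightarrow> (nat \<Rightarrow> nat) \<Rightarrow> real" where
  "rate C d \<sigma> \<beta> N m m' =
     (\<Sum>n\<in>{1..C}. if m n < m (n - 1) \<and> m' = m(n := Suc (m n))
        then real N * lam \<sigma> \<beta> N *
             ((real (m (n - 1)) / real N) ^ d - (real (m n) / real N) ^ d)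
        else 0)
   + (\<Sum>n\<in>{1..C}. if m (Suc n) < m n \<and> m' = m(n := m n - 1)
        then real n * (real (m n) - real (m (Suc n)))
        else 0)"

definition is_distr :: "(nat \<Rightarrow> nat) set \<Rightarrow> ((nat \<Rightarrow> nat) \<Rightarrow> real) \<Rightarrow> bool" where
  "is_distr S \<mu> \<longleftrightarrow> (\<forall>m. 0 \<le> \<mu> m) \<and> (\<forall>m. m \<notin> S \<longrightarrow> \<mu> m = 0) \<and> sum \<mu> S = 1"

text \<open>p t m = P(state at time t = m): the law of X^(N)(t) started from the initial law mu,
  characterised as the (unique) solution of the Kolmogorov forward equations on [0,oo).\<close>
definition law_process ::
  "nat \<Rightarrow> nat \<Rightarrow> real \<Rightarrow> real \<Rightarrow> nat \<Rightarrow> ((nat \<Rightarrow> nat) \<Rightarrow> real) \<Rightarrow> (real \<Rightarrow> (nat \<Rightarrow> nat) \<Rightarrow> real) \<Rightarrow> bool" where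
  "law_process C d \<sigma> \<beta> N \<mu> p \<longleftrightarrow>
     p 0 = \<mu> \<and>
     (\<forall>t\<ge>0. \<forall>m. m \<notin> states C N \<longrightarrow> p t m = 0) \<and>
     (\<forall>t\<ge>0. \<forall>m\<in>states C N.
        ((\<lambda>s. p s m) has_real_derivative
           ((\<Sum>m'\<in>states C N. p t m' * rate C d \<sigma> \<beta> N m' m)
            - p t m * (\<Sum>m'\<in>states C N. rate C d \<sigma> \<beta> N m m'))) (at t within {0..}))"

definition stationary :: "nat \<Rightarrow> nat \<Rightarrow> real \<Rightarrow> real \<Rightarrow> nat \<Rightarrow> ((nat \<Rightarrow> nat) \<Rightarrow> real) \<Rightarrow> bool" where
  "stationary C d \<sigma> \<beta> N \<nu> \<longleftrightarrow> is_distr (states C N) \<nu> \<and>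
     (\<forall>m\<in>states C N. (\<Sum>m'\<in>states C N. \<nu> m' * rate C d \<sigma> \<beta> N m' m)
                        = \<nu> m * (\<Sum>m'\<in>states C N. rate C d \<sigma> \<beta> N m m'))"

definition sq_dev :: "nat \<Rightarrow> (nat \<Rightarrow> real) \<Rightarrow> nat \<Rightarrow> (nat \<Rightarrow> nat) \<Rightarrow> real" where
  "sq_dev C \<pi> N m = real N * (\<Sum>n\<le>C. (real (m n) / real N - \<pi> n)\<^sup>2)"

definition expect :: "(nat \<Rightarrow> nat) set \<Rightarrow> ((nat \<Rightarrow> nat) \<Rightarrow> real) \<Rightarrow> ((nat \<Rightarrow> nat) \<Rightarrow> real) \<Rightarrow> real" where
  "expect S \<mu> f = (\<Sum>m\<in>S. \<mu> m * f m)"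

end

theory Submission
  imports Defs
begin


lemma gronwall0:
  fixes f f' :: "real \<Rightarrow> real" and L t :: real
  assumes der: "\<And>t. t \<ge> 0 \<Longrightarrow> (f has_real_derivative f' t) (at t within {0..})"
    and le: "\<And>t. t \<ge> 0 \<Longrightarrow> f' t \<le> L * f t" and t: "t \<ge> 0"
  shows "f t \<le> f 0 * exp (L * t)"
proof -
  define q where "q s = f s * exp (- L * s)" for s
  define q' where "q' s = f' s * exp (- L * s) + exp (- L * s) * (- L) * f s" for s
  have dq: "(q has_real_derivative q' s) (at s within {0..t})" if "0 \<le> s" "s \<le> t" for s
  proof -
    have "(f has_real_derivative f' s) (at s within {0..t})"
      by (rule has_field_derivative_subset[OF der[OF that(1)]]) auto
    moreover have "((\<lambda>s. exp (- L * s)) has_real_derivative exp (- L * s) * (- L)) (at s within {0..t})"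
      by (auto intro!: derivative_eq_intros)
    ultimately show ?thesis unfolding q_def q'_def by (rule DERIV_mult)
  qed
  have q'le: "q' s \<le> 0" if "0 \<le> s" for s
  proof -
    have "q' s = (f' s - L * f s) * exp (- L * s)" unfolding q'_def by (simp add: algebra_simps)
    also have "\<dots> \<le> 0" using le[OF that] by (simp add: mult_nonpos_nonneg)
    finally show ?thesis .
  qed
  obtain x where x: "x \<in> {0..t}" "q t - q 0 = q' x * (t - 0)"
    using mvt_very_simple[OF t, of q "\<lambda>s. (*) (q' s)"] dq[unfolded has_field_derivative_def]
    by force
  have "q t \<le> q 0" proof -
    have "q' x * t \<le> 0" using x q'le[of x] t by (simp add: mult_nonpos_nonneg)
    thus ?thesis using x by simp
  qed
  hence "f t * exp (- L * t) \<le> f 0" unfolding q_def by simp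
  hence "f t * exp (- L * t) * exp (L * t) \<le> f 0 * exp (L * t)" by (simp add: mult_right_mono)
  thus ?thesis by (simp add: mult.assoc exp_add[symmetric])
qed

lemma gen_identity:
  fixes S :: "'a set" and r :: "'a \<Rightarrow> 'a \<Rightarrow> real"
  assumes "finite S"
  shows "(\<Sum>m\<in>S. ((\<Sum>m'\<in>S. q m' * r m' m) - q m * (\<Sum>m'\<in>S. r m m')) * f m)
       = (\<Sum>m\<in>S. q m * (\<Sum>m'\<in>S. r m m' * (f m' - f m)))"
proof -
  have A: "(\<Sum>m\<in>S. (\<Sum>m'\<in>S. q m' * r m' m) * f m) = (\<Sum>m\<in>S. \<Sum>m'\<in>S. q m * r m m' * f m')"
  proof -
    have "(\<Sum>m\<in>S. (\<Sum>m'\<in>S. q m' * r m' m) * f m) = (\<Sum>m\<in>S. \<Sum>m'\<in>S. q m' * r m' m * f m)"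
      by (simp add: sum_distrib_right)
    also have "\<dots> = (\<Sum>m'\<in>S. \<Sum>m\<in>S. q m' * r m' m * f m)" by (rule sum.swap)
    finally show ?thesis .
  qed
  have B: "(\<Sum>m\<in>S. q m * (\<Sum>m'\<in>S. r m m') * f m) = (\<Sum>m\<in>S. \<Sum>m'\<in>S. q m * r m m' * f m)"
    by (simp add: sum_distrib_left sum_distrib_right)
  have "(\<Sum>m\<in>S. ((\<Sum>m'\<in>S. q m' * r m' m) - q m * (\<Sum>m'\<in>S. r m m')) * f m)
      = (\<Sum>m\<in>S. (\<Sum>m'\<in>S. q m' * r m' m) * f m) - (\<Sum>m\<in>S. q m * (\<Sum>m'\<in>S. r m m') * f m)"
    by (simp add: left_diff_distrib sum_subtractf)
  also have "\<dots> = (\<Sum>m\<in>S. \<Sum>m'\<in>S. q m * r m m' * f m' - q m * r m m' * f m)"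
    unfolding A B by (simp add: sum_subtractf)
  also have "\<dots> = (\<Sum>m\<in>S. q m * (\<Sum>m'\<in>S. r m m' * (f m' - f m)))"
    by (simp add: sum_distrib_left right_diff_distrib mult.assoc)
  finally show ?thesis .
qed

lemma expect_deriv:
  fixes S :: "'a set" and r :: "'a \<Rightarrow> 'a \<Rightarrow> real"
  assumes "finite S"
    and der: "\<And>m. m \<in> S \<Longrightarrow> ((\<lambda>s. p s m) has_real_derivative
           ((\<Sum>m'\<in>S. p t m' * r m' m) - p t m * (\<Sum>m'\<in>S. r m m'))) (at t within {0..})"
  shows "((\<lambda>s. \<Sum>m\<in>S. p s m * f m) has_real_derivative
           (\<Sum>m\<in>S. p t m * (\<Sum>m'\<in>S. r m m' * (f m' - f m)))) (at t within {0..})"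
proof -
  have "((\<lambda>s. \<Sum>m\<in>S. p s m * f m) has_real_derivative
      (\<Sum>m\<in>S. ((\<Sum>m'\<in>S. p t m' * r m' m) - p t m * (\<Sum>m'\<in>S. r m m')) * f m)) (at t within {0..})"
    by (rule DERIV_sum, rule DERIV_cmult_right, rule der)
  thus ?thesis using gen_identity[OF assms(1)] by simp
qed

lemma dmin2: "((\<lambda>y::real. (min 0 y)^2) has_real_derivative 2 * min 0 y) (at y)"
proof (cases "y < 0")
  case True
  have "((\<lambda>y::real. y^2) has_real_derivative 2 * y) (at y)"
    by (auto intro!: derivative_eq_intros)
  then have "((\<lambda>y::real. (min 0 y)^2) has_real_derivative 2 * y) (at y)"
    by (rule has_field_derivative_transform_within_open[where S="{..<0}"]) (use True in auto)
  then show ?thesis using True by simp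
next
  case False
  show ?thesis
  proof (cases "y > 0")
    case True
    have "((\<lambda>y::real. 0) has_real_derivative 0) (at y)" by simp
    then have "((\<lambda>y::real. (min 0 y)^2) has_real_derivative 0) (at y)"
      by (rule has_field_derivative_transform_within_open[where S="{0<..}"]) (use True in auto)
    then show ?thesis using True by simp
  next
    case False
    with \<open>\<not> y < 0\<close> have y: "y = 0" by simp
    have e: "((min 0 (0 + h))^2 - (min 0 0)^2) / h = min 0 h" for h :: real
      by (cases "h < 0") (auto simp: power2_eq_square min_def)
    have "((\<lambda>h. ((min 0 (0 + h))^2 - (min 0 0)^2) / h) \<longlongrightarrow> 0) (at (0::real))"
    proof (rule tendsto_sandwich[where f="\<lambda>h. - \<bar>h\<bar>" and h="\<lambda>h. \<bar>h\<bar>"])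
      show "\<forall>\<^sub>F h::real in at 0. - \<bar>h\<bar> \<le> ((min 0 (0 + h))^2 - (min 0 0)^2) / h"
        by (intro always_eventually allI, rename_tac x, case_tac "x < 0") (auto simp: min_def power2_eq_square)
      show "\<forall>\<^sub>F h::real in at 0. ((min 0 (0 + h))^2 - (min 0 0)^2) / h \<le> \<bar>h\<bar>"
        by (intro always_eventually allI, rename_tac x, case_tac "x < 0") (auto simp: min_def power2_eq_square)
      show "((\<lambda>h::real. - \<bar>h\<bar>) \<longlongrightarrow> 0) (at 0)"
        by (rule tendsto_eq_intros refl | simp)+
      show "((\<lambda>h::real. \<bar>h\<bar>) \<longlongrightarrow> 0) (at 0)"
        by (rule tendsto_eq_intros refl | simp)+
    qed
    thus ?thesis using y by (simp add: DERIV_def)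
  qed
qed

lemma positivity:
  fixes S :: "'a set" and r :: "'a \<Rightarrow> 'a \<Rightarrow> real" and p :: "real \<Rightarrow> 'a \<Rightarrow> real"
  assumes fin: "finite S" and rnn: "\<And>a b. a \<in> S \<Longrightarrow> b \<in> S \<Longrightarrow> r a b \<ge> 0"
    and der: "\<And>t m. t \<ge> 0 \<Longrightarrow> m \<in> S \<Longrightarrow> ((\<lambda>s. p s m) has_real_derivative
           ((\<Sum>m'\<in>S. p t m' * r m' m) - p t m * (\<Sum>m'\<in>S. r m m'))) (at t within {0..})"
    and init: "\<And>m. m \<in> S \<Longrightarrow> p 0 m \<ge> 0"
    and t: "t \<ge> 0" and m: "m \<in> S"
  shows "p t m \<ge> 0"
proof -
  define v where "v s m = min 0 (p s m)" for s m
  define h where "h s = (\<Sum>m\<in>S. (v s m)^2)" for s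
  define D where "D s m = (\<Sum>m'\<in>S. p s m' * r m' m) - p s m * (\<Sum>m'\<in>S. r m m')" for s m
  define R where "R = (\<Sum>a\<in>S. \<Sum>b\<in>S. r a b)"
  define L where "L = 2 * R * real (card S)"
  have rle: "r a b \<le> R" if "a \<in> S" "b \<in> S" for a b
  proof -
    have "r a b \<le> (\<Sum>b\<in>S. r a b)" using that fin rnn by (intro member_le_sum) auto
    also have "\<dots> \<le> R" unfolding R_def using that fin rnn by (intro member_le_sum sum_nonneg) auto
    finally show ?thesis .
  qed
  have R0: "R \<ge> 0" unfolding R_def using rnn by (intro sum_nonneg) auto
  have vle: "(v s a)^2 \<le> h s" if "a \<in> S" for s a
    unfolding h_def using that fin by (intro member_le_sum) auto
  have dh: "(h has_real_derivative (\<Sum>m\<in>S. 2 * v s m * D s m)) (at s within {0..})" if "s \<ge> 0" for s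
    unfolding h_def v_def D_def
    by (rule DERIV_sum, rule DERIV_chain2[where f="\<lambda>y. (min 0 y)^2", OF dmin2], rule der[OF that])
  have hle: "(\<Sum>m\<in>S. 2 * v s m * D s m) \<le> L * h s" if "s \<ge> 0" for s
  proof -
    have tm: "2 * v s a * D s a \<le> R * (real (card S) * (v s a)^2 + h s)" if a: "a \<in> S" for a
    proof -
      have v0: "v s a \<le> 0" unfolding v_def by simp
      have vp: "v s a * p s a = (v s a)^2" unfolding v_def by (simp add: min_def power2_eq_square)
      have out0: "(\<Sum>m'\<in>S. r a m') \<ge> 0" using rnn a by (intro sum_nonneg) auto
      have A: "v s a * (\<Sum>m'\<in>S. p s m' * r m' a) \<le> (\<Sum>m'\<in>S. v s a * v s m' * r m' a)"
        unfolding sum_distrib_left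
      proof (rule sum_mono)
        fix b assume b: "b \<in> S"
        have "v s b * r b a \<le> p s b * r b a"
          using rnn[OF b a] by (intro mult_right_mono) (auto simp: v_def)
        from mult_left_mono_neg[OF this v0] show "v s a * (p s b * r b a) \<le> v s a * v s b * r b a"
          by (simp add: mult.assoc)
      qed
      have B: "2 * (v s a * v s b * r b a) \<le> ((v s a)^2 + (v s b)^2) * R" if b: "b \<in> S" for b
      proof -
        have "2 * (v s a * v s b) \<le> (v s a)^2 + (v s b)^2"
          using sum_squares_bound[of "v s a" "v s b"] by (simp add: mult.assoc)
        moreover have "v s a * v s b \<ge> 0" using v0 by (simp add: v_def zero_le_mult_iff)
        ultimately have "2 * (v s a * v s b) * r b a \<le> ((v s a)^2 + (v s b)^2) * r b a"
          using rnn[OF b a] by (intro mult_right_mono) auto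
        also have "\<dots> \<le> ((v s a)^2 + (v s b)^2) * R"
          using rle[OF b a] by (intro mult_left_mono) auto
        finally show ?thesis by (simp add: mult.assoc)
      qed
      have "2 * v s a * D s a = 2 * (v s a * (\<Sum>m'\<in>S. p s m' * r m' a)) - 2 * (v s a)^2 * (\<Sum>m'\<in>S. r a m')"
        unfolding D_def using vp by (simp add: algebra_simps)
      also have "\<dots> \<le> 2 * (v s a * (\<Sum>m'\<in>S. p s m' * r m' a))"
        using out0 by simp
      also have "\<dots> \<le> (\<Sum>m'\<in>S. 2 * (v s a * v s m' * r m' a))"
        using A by (simp add: sum_distrib_left[symmetric])
      also have "\<dots> \<le> (\<Sum>m'\<in>S. ((v s a)^2 + (v s m')^2) * R)"
        by (rule sum_mono) (rule B)
      also have "\<dots> = R * (real (card S) * (v s a)^2 + h s)"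
        unfolding h_def by (simp add: sum.distrib sum_distrib_left sum_distrib_right algebra_simps)
      finally show ?thesis .
    qed
    have "(\<Sum>m\<in>S. 2 * v s m * D s m) \<le> (\<Sum>m\<in>S. R * (real (card S) * (v s m)^2 + h s))"
      by (rule sum_mono) (rule tm)
    also have "\<dots> = R * real (card S) * (\<Sum>m\<in>S. (v s m)^2) + R * real (card S) * h s"
      by (simp add: sum.distrib sum_distrib_left algebra_simps)
    also have "\<dots> = L * h s"
      unfolding L_def h_def by (simp add: algebra_simps)
    finally show ?thesis .
  qed
  have h0: "h 0 = 0" unfolding h_def v_def using init by (intro sum.neutral) auto
  have "h t \<le> h 0 * exp (L * t)"
    by (rule gronwall0[OF dh hle t])
  hence "h t \<le> 0" using h0 by simp
  hence "(v t m)^2 \<le> 0" using vle[OF m, of t] by linarith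
  hence "v t m = 0" by simp
  thus ?thesis unfolding v_def by (simp add: min_def split: if_splits)
qed

lemma pow_lip:
  fixes x y :: real
  assumes "0 \<le> x" "x \<le> 1" "0 \<le> y" "y \<le> 1" "d \<ge> 1"
  shows "\<exists>k. 0 \<le> k \<and> k \<le> real d \<and> x ^ d - y ^ d = k * (x - y)"
proof -
  obtain e where e: "d = Suc e" using assms(5) by (cases d) auto
  define k where "k = (\<Sum>p<Suc e. (x ^ p) * y ^ (e - p))"
  have "x ^ d - y ^ d = (x - y) * k" unfolding e k_def by (rule diff_power_eq_sum)
  moreover have "0 \<le> k" unfolding k_def using assms by (intro sum_nonneg) auto
  moreover have "k \<le> (\<Sum>p<Suc e. 1)" unfolding k_def
    using assms by (intro sum_mono) (auto intro!: mult_le_one power_le_one)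
  ultimately show ?thesis using e by (intro exI[of _ k]) (auto simp: mult.commute)
qed

lemma sqrt_facts:
  fixes u e :: real assumes "e > 0"
  shows "\<bar>u\<bar> \<le> sqrt (u^2 + e^2)" "e \<le> sqrt (u^2 + e^2)" "sqrt (u^2 + e^2) \<le> \<bar>u\<bar> + e"
    "sqrt (u^2 + e^2) > 0"
proof -
  show "\<bar>u\<bar> \<le> sqrt (u^2 + e^2)" by (rule real_le_rsqrt) (simp add: power2_abs)
  show "e \<le> sqrt (u^2 + e^2)" using assms by (intro real_le_rsqrt) auto
  show "sqrt (u^2 + e^2) \<le> \<bar>u\<bar> + e"
  proof -
    have "u^2 + e^2 \<le> (\<bar>u\<bar> + e)^2" using assms by (simp add: power2_sum)
    hence "sqrt (u^2 + e^2) \<le> sqrt ((\<bar>u\<bar> + e)^2)" by (rule real_sqrt_le_mono)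
    also have "\<dots> = \<bar>u\<bar> + e" using assms by simp
    finally show ?thesis .
  qed
  show "sqrt (u^2 + e^2) > 0" using assms by (intro real_sqrt_gt_zero) (simp add: add_nonneg_pos)
qed

lemma term_bound:
  fixes u D p1 p2 e sg :: real and n C d :: nat
  assumes e: "e > 0" and p1: "\<bar>p1\<bar> \<le> 1" and p2: "\<bar>p2\<bar> \<le> 1"
    and k: "0 \<le> k" "k \<le> real d" "D = k * u" and sg: "sg \<ge> 0" and n: "1 \<le> n" "n \<le> C"
  shows "sg * p1 * D - sg * (u / sqrt (u^2 + e^2)) * D - real n * (u / sqrt (u^2 + e^2)) * u
           + real (n - 1) * p2 * u \<le> - \<bar>u\<bar> + e * (sg * real d + real C)"
proof -
  define r where "r = sqrt (u^2 + e^2)"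
  note sf = sqrt_facts[OF e, of u, folded r_def]
  have r0: "r > 0" using sf by simp
  have a: "p1 * D - (u / r) * D \<le> real d * e"
  proof -
    have "p1 * D \<le> \<bar>p1\<bar> * \<bar>D\<bar>" by (metis abs_ge_self abs_mult)
    also have "\<dots> \<le> \<bar>D\<bar>" using p1 by (intro mult_left_le_one_le) auto
    finally have "p1 * D \<le> \<bar>D\<bar>" .
    moreover have "(u / r) * D = \<bar>u\<bar> / r * \<bar>D\<bar>"
    proof -
      have "\<bar>D\<bar> = k * \<bar>u\<bar>" using k by (simp add: abs_mult)
      hence "\<bar>u\<bar> / r * \<bar>D\<bar> = k * (\<bar>u\<bar> * \<bar>u\<bar>) / r" by simp
      also have "\<dots> = k * (u * u) / r" by (simp add: abs_mult_self_eq)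
      also have "\<dots> = (u / r) * D" using k by simp
      finally show ?thesis by (rule sym)
    qed
    ultimately have "p1 * D - (u / r) * D \<le> \<bar>D\<bar> * ((r - \<bar>u\<bar>) / r)"
      using r0 by (simp add: field_simps)
    also have "\<dots> \<le> (real d * \<bar>u\<bar>) * ((r - \<bar>u\<bar>) / r)"
      using k sf r0 by (intro mult_right_mono) (auto simp: abs_mult intro!: mult_right_mono)
    also have "\<dots> = real d * ((r - \<bar>u\<bar>) * (\<bar>u\<bar> / r))" by simp
    also have "\<dots> \<le> real d * ((r - \<bar>u\<bar>) * 1)"
      using sf r0 by (intro mult_left_mono) auto
    also have "\<dots> \<le> real d * e" using sf by (intro mult_left_mono) auto
    finally show ?thesis .
  qed
  have b: "u * u / r \<ge> \<bar>u\<bar> - e"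
  proof (cases "\<bar>u\<bar> \<le> e")
    case True
    have "u * u / r \<ge> 0" using r0 by simp
    thus ?thesis using True by linarith
  next
    case False
    have "r * (\<bar>u\<bar> - e) \<le> (\<bar>u\<bar> + e) * (\<bar>u\<bar> - e)" using sf False by (intro mult_right_mono) auto
    also have "\<dots> \<le> u * u" by (simp add: algebra_simps abs_mult_self_eq)
    finally show ?thesis using r0 by (simp add: field_simps mult.commute)
  qed
  have c: "real (n - 1) * p2 * u \<le> real (n - 1) * \<bar>u\<bar>"
  proof -
    have "p2 * u \<le> \<bar>p2\<bar> * \<bar>u\<bar>" by (metis abs_ge_self abs_mult)
    also have "\<dots> \<le> \<bar>u\<bar>" using p2 by (intro mult_left_le_one_le) auto
    finally show ?thesis by (simp add: mult.assoc mult_left_mono)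
  qed
  have "sg * p1 * D - sg * (u / r) * D = sg * (p1 * D - (u / r) * D)" by (simp add: algebra_simps)
  also have "\<dots> \<le> sg * (real d * e)" using a sg by (rule mult_left_mono)
  finally have A: "sg * p1 * D - sg * (u / r) * D \<le> sg * (real d * e)" .
  have B: "real n * (u / r) * u \<ge> real n * (\<bar>u\<bar> - e)"
  proof -
    have "real n * (\<bar>u\<bar> - e) \<le> real n * (u * u / r)" by (rule mult_left_mono[OF b]) simp
    thus ?thesis by simp
  qed
  have "real (n - 1) = real n - 1" using n by simp
  hence "- real n * (\<bar>u\<bar> - e) + real (n - 1) * \<bar>u\<bar> = - \<bar>u\<bar> + real n * e" by (simp add: algebra_simps)
  moreover have "real n * e \<le> real C * e" using n e by simp
  ultimately show ?thesis using A B c unfolding r_def[symmetric] by (simp add: algebra_simps)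
qed

lemma phi_le1: "e > 0 \<Longrightarrow> \<bar>u / sqrt (u^2 + e^2)\<bar> \<le> (1::real)"
  using sqrt_facts[of e u] by (simp add: abs_div divide_le_eq_1)

lemma key_drift:
  fixes x \<pi> :: "nat \<Rightarrow> real" and C d :: nat and \<sigma> e :: real
  assumes C: "C \<ge> 1" and d: "d \<ge> 1" and \<sigma>: "\<sigma> \<ge> 0" and e: "e > 0"
    and x0: "x 0 = 1" and \<pi>0: "\<pi> 0 = 1" and xC: "x (Suc C) = 0" and \<pi>C: "\<pi> (Suc C) = 0"
    and xr: "\<And>n. n \<le> C \<Longrightarrow> 0 \<le> x n \<and> x n \<le> 1"
    and \<pi>r: "\<And>n. n \<le> C \<Longrightarrow> 0 \<le> \<pi> n \<and> \<pi> n \<le> 1"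
    and \<pi>fix: "\<forall>n\<in>{1..C}. \<sigma> * (\<pi> (n - 1) ^ d - \<pi> n ^ d) = real n * (\<pi> n - \<pi> (Suc n))"
  shows "(\<Sum>n\<in>{1..C}. ((x n - \<pi> n) / sqrt ((x n - \<pi> n)^2 + e^2)) *
            (\<sigma> * (x (n - 1) ^ d - x n ^ d) - real n * (x n - x (Suc n))))
         \<le> - (\<Sum>n\<in>{1..C}. \<bar>x n - \<pi> n\<bar>) + e * real C * (\<sigma> * real d + real C)"
proof -
  define u where "u n = x n - \<pi> n" for n
  define \<phi> where "\<phi> n = u n / sqrt ((u n)^2 + e^2)" for n
  define \<Delta> where "\<Delta> n = x n ^ d - \<pi> n ^ d" for n
  define T where "T n = \<phi> (Suc n) * \<Delta> n" for n
  define W where "W n = real n * \<phi> n * u (Suc n)" for n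
  have u0: "u (Suc C) = 0" unfolding u_def using xC \<pi>C by simp
  have \<phi>C: "\<phi> (Suc C) = 0" unfolding \<phi>_def using u0 by simp
  have \<Delta>0: "\<Delta> 0 = 0" unfolding \<Delta>_def using x0 \<pi>0 by simp
  have tT: "(\<Sum>n\<in>{1..C}. T n - T (n - 1)) = 0"
    using sum_telescope''[of 0 C T] \<phi>C \<Delta>0 by (simp add: T_def)
  have tW: "(\<Sum>n\<in>{1..C}. W n - W (n - 1)) = 0"
    using sum_telescope''[of 0 C W] u0 by (simp add: W_def)
  have expand: "(\<phi> n) * (\<sigma> * (x (n - 1) ^ d - x n ^ d) - real n * (x n - x (Suc n)))
      = (\<sigma> * \<phi> (Suc n) * \<Delta> n - \<sigma> * \<phi> n * \<Delta> n - real n * \<phi> n * u n + real (n - 1) * \<phi> (n - 1) * u n)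
        + \<sigma> * (T (n - 1) - T n) + (W n - W (n - 1))"
    if n: "n \<in> {1..C}" for n
  proof -
    have fx: "\<sigma> * (\<pi> (n - 1) ^ d - \<pi> n ^ d) = real n * (\<pi> n - \<pi> (Suc n))" using \<pi>fix n by auto
    have sn: "Suc (n - 1) = n" using n by simp
    have eq: "\<sigma> * (x (n - 1) ^ d - x n ^ d) - real n * (x n - x (Suc n))
        = \<sigma> * (\<Delta> (n - 1) - \<Delta> n) - real n * (u n - u (Suc n))"
      using fx unfolding \<Delta>_def u_def by (simp add: algebra_simps)
    have t1: "T (n - 1) = \<phi> n * \<Delta> (n - 1)" unfolding T_def using sn by simp
    have w1: "W (n - 1) = real (n - 1) * \<phi> (n - 1) * u n" unfolding W_def using sn by simp
    show ?thesis unfolding eq t1 w1 unfolding T_def W_def by (simp add: algebra_simps)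
  qed
  have bound: "\<sigma> * \<phi> (Suc n) * \<Delta> n - \<sigma> * \<phi> n * \<Delta> n - real n * \<phi> n * u n + real (n - 1) * \<phi> (n - 1) * u n
      \<le> - \<bar>u n\<bar> + e * (\<sigma> * real d + real C)" if n: "n \<in> {1..C}" for n
  proof -
    have "n \<le> C" using n by simp
    then obtain k where k: "0 \<le> k" "k \<le> real d" "\<Delta> n = k * u n"
      using pow_lip[of "x n" "\<pi> n" d] xr \<pi>r d unfolding \<Delta>_def u_def by auto
    show ?thesis
      using term_bound[OF e phi_le1[OF e, of "u (Suc n)"] phi_le1[OF e, of "u (n - 1)"] k \<sigma>, of n C] n
      unfolding \<phi>_def by (simp add: mult.assoc)
  qed
  have "(\<Sum>n\<in>{1..C}. \<phi> n * (\<sigma> * (x (n - 1) ^ d - x n ^ d) - real n * (x n - x (Suc n))))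
     = (\<Sum>n\<in>{1..C}. \<sigma> * \<phi> (Suc n) * \<Delta> n - \<sigma> * \<phi> n * \<Delta> n - real n * \<phi> n * u n + real (n - 1) * \<phi> (n - 1) * u n)
       + \<sigma> * (\<Sum>n\<in>{1..C}. T (n - 1) - T n) + (\<Sum>n\<in>{1..C}. W n - W (n - 1))"
    by (subst sum.cong[OF refl expand], assumption) (simp only: sum.distrib sum_distrib_left)
  also have "(\<Sum>n\<in>{1..C}. T (n - 1) - T n) = 0"
    using tT by (simp add: sum_subtractf)
  also have "(\<Sum>n\<in>{1..C}. W n - W (n - 1)) = 0" by (rule tW)
  also have "(\<Sum>n\<in>{1..C}. \<sigma> * \<phi> (Suc n) * \<Delta> n - \<sigma> * \<phi> n * \<Delta> n - real n * \<phi> n * u n + real (n - 1) * \<phi> (n - 1) * u n)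
      \<le> (\<Sum>n\<in>{1..C}. - \<bar>u n\<bar> + e * (\<sigma> * real d + real C))"
    by (rule sum_mono) (rule bound)
  also have "(\<Sum>n\<in>{1..C}. - \<bar>u n\<bar> + e * (\<sigma> * real d + real C))
      = - (\<Sum>n\<in>{1..C}. \<bar>u n\<bar>) + e * real C * (\<sigma> * real d + real C)"
    by (simp only: sum.distrib sum_negf sum_constant card_atLeastAtMost) (simp add: algebra_simps)
  finally have L: "(\<Sum>n\<in>{1..C}. \<phi> n * (\<sigma> * (x (n - 1) ^ d - x n ^ d) - real n * (x n - x (Suc n))))
      \<le> - (\<Sum>n\<in>{1..C}. \<bar>u n\<bar>) + e * real C * (\<sigma> * real d + real C)" by simp
  thus ?thesis unfolding u_def \<phi>_def .
qed

lemma sqrt_shift_le: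
  fixes u v e2 :: real assumes "e2 > 0"
  shows "sqrt (v^2 + e2) \<le> sqrt (u^2 + e2) + \<bar>v - u\<bar>"
proof -
  define a where "a = sqrt (u^2 + e2)"
  have a0: "a \<ge> 0" "a^2 = u^2 + e2" unfolding a_def using assms by simp_all
  have au: "\<bar>u\<bar> \<le> a" unfolding a_def using assms by (intro real_le_rsqrt) (simp add: power2_abs)
  have "v^2 + e2 = a^2 + 2 * u * (v - u) + (v - u)^2" using a0 by (simp add: power2_eq_square algebra_simps)
  also have "\<dots> \<le> a^2 + 2 * a * \<bar>v - u\<bar> + (v - u)^2"
  proof -
    have "u * (v - u) \<le> \<bar>u\<bar> * \<bar>v - u\<bar>" by (metis abs_ge_self abs_mult)
    also have "\<dots> \<le> a * \<bar>v - u\<bar>" using au by (intro mult_right_mono) auto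
    finally show ?thesis by simp
  qed
  also have "\<dots> = (a + \<bar>v - u\<bar>)^2" by (simp add: power2_eq_square algebra_simps)
  finally have "sqrt (v^2 + e2) \<le> sqrt ((a + \<bar>v - u\<bar>)^2)" by (rule real_sqrt_le_mono)
  also have "\<dots> = a + \<bar>v - u\<bar>" using a0 by simp
  finally show ?thesis unfolding a_def .
qed

lemma jump:
  fixes s u \<delta> e2 :: real
  assumes e2: "e2 > 0" and s: "s \<ge> 0"
  shows "(s - sqrt (u^2 + e2) + sqrt ((u + \<delta>)^2 + e2))^2 - s^2
        \<le> 2 * s * (u * \<delta> / sqrt (u^2 + e2)) + s * \<delta>^2 / sqrt e2 + \<delta>^2"
proof -
  define a where "a = sqrt (u^2 + e2)"
  define b where "b = sqrt ((u + \<delta>)^2 + e2)"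
  have p1: "0 \<le> u^2 + e2" "0 \<le> (u + \<delta>)^2 + e2"
    using e2 zero_le_power2[of u] zero_le_power2[of "u + \<delta>"] by linarith+
  have a2: "a^2 = u^2 + e2" and b2: "b^2 = (u + \<delta>)^2 + e2" unfolding a_def b_def
    using real_sqrt_pow2[OF p1(1)] real_sqrt_pow2[OF p1(2)] by simp_all
  have ae: "sqrt e2 \<le> a" unfolding a_def by (rule real_sqrt_le_mono) simp
  have e0: "sqrt e2 > 0" using e2 by simp
  have a0: "a > 0" using ae e0 by linarith
  have b0: "b \<ge> 0" unfolding b_def using p1(2) by simp
  have i: "b - a \<le> u * \<delta> / a + \<delta>^2 / (2 * a)"
  proof -
    have "a * b \<le> (a^2 + b^2) / 2" using sum_squares_bound[of a b] by (simp add: power2_eq_square)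
    hence "a * (b - a) \<le> u * \<delta> + \<delta>^2 / 2" using a2 b2 by (simp add: power2_eq_square algebra_simps)
    hence "b - a \<le> (u * \<delta> + \<delta>^2 / 2) / a" using a0 by (simp add: field_simps)
    thus ?thesis using a0 by (simp add: field_simps)
  qed
  have ii: "\<delta>^2 / (2 * a) \<le> \<delta>^2 / (2 * sqrt e2)"
    using ae e0 a0 by (intro divide_left_mono) auto
  have iii: "(b - a)^2 \<le> \<delta>^2"
  proof -
    have "b \<le> a + \<bar>\<delta>\<bar>" using sqrt_shift_le[OF e2, of "u + \<delta>" u] unfolding a_def b_def by simp
    moreover have "a \<le> b + \<bar>\<delta>\<bar>" using sqrt_shift_le[OF e2, of u "u + \<delta>"] unfolding a_def b_def by simp
    ultimately have "\<bar>b - a\<bar> \<le> \<bar>\<delta>\<bar>" by linarith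
    thus ?thesis by (metis abs_ge_zero power2_abs power_mono)
  qed
  have "(s - a + b)^2 - s^2 = 2 * s * (b - a) + (b - a)^2" by (simp add: power2_eq_square algebra_simps)
  also have "\<dots> \<le> 2 * s * (u * \<delta> / a + \<delta>^2 / (2 * sqrt e2)) + \<delta>^2"
    using i ii iii s by (intro add_mono mult_left_mono) auto
  also have "\<dots> = 2 * s * (u * \<delta> / a) + s * \<delta>^2 / sqrt e2 + \<delta>^2"
    using e0 by (simp add: field_simps)
  finally show ?thesis unfolding a_def b_def .
qed

lemma sq_e_pos: "(e2::real) > 0 \<Longrightarrow> 0 < y^2 + e2"
  using zero_le_power2[of y] by linarith

lemma sum_upd:
  fixes g :: "nat \<Rightarrow> real \<Rightarrow> real"
  assumes "n \<in> A" "finite A"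
  shows "(\<Sum>j\<in>A. g j ((x(n := v)) j)) = (\<Sum>j\<in>A. g j (x j)) - g n (x n) + g n v"
proof -
  have "(\<Sum>j\<in>A. g j ((x(n := v)) j)) = g n v + (\<Sum>j\<in>A - {n}. g j ((x(n := v)) j))"
    using assms by (simp add: sum.remove)
  also have "(\<Sum>j\<in>A - {n}. g j ((x(n := v)) j)) = (\<Sum>j\<in>A - {n}. g j (x j))"
    by (rule sum.cong) auto
  also have "(\<Sum>j\<in>A. g j (x j)) = g n (x n) + (\<Sum>j\<in>A - {n}. g j (x j))"
    using assms by (simp add: sum.remove)
  ultimately show ?thesis by simp
qed

definition Vf :: "nat \<Rightarrow> nat \<Rightarrow> (nat \<Rightarrow> real) \<Rightarrow> (nat \<Rightarrow> real) \<Rightarrow> real" where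
  "Vf C N \<pi> y = real N * (\<Sum>n\<in>{1..C}. sqrt ((y n - \<pi> n)^2 + 1 / real N))^2"

lemma jumpV:
  fixes x \<pi> :: "nat \<Rightarrow> real"
  assumes N: "N \<ge> 1" and n: "n \<in> {1..C}" and del: "\<delta> = 1 \<or> \<delta> = -1"
  shows "Vf C N \<pi> (x(n := x n + \<delta> / real N)) - Vf C N \<pi> x
     \<le> 2 * \<delta> * (\<Sum>j\<in>{1..C}. sqrt ((x j - \<pi> j)^2 + 1 / real N)) *
          ((x n - \<pi> n) / sqrt ((x n - \<pi> n)^2 + 1 / real N))
       + (\<Sum>j\<in>{1..C}. sqrt ((x j - \<pi> j)^2 + 1 / real N)) / sqrt (real N) + 1 / real N"
proof -
  define e2 where "e2 = 1 / real N"
  define s where "s = (\<Sum>j\<in>{1..C}. sqrt ((x j - \<pi> j)^2 + e2))"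
  define u where "u = x n - \<pi> n"
  have e2: "e2 > 0" unfolding e2_def using N by simp
  have s0: "s \<ge> 0" unfolding s_def using sq_e_pos[OF e2] by (intro sum_nonneg real_sqrt_ge_zero less_imp_le) auto
  have N0: "real N > 0" using N by simp
  have su: "(\<Sum>j\<in>{1..C}. sqrt (((x(n := x n + \<delta> / real N)) j - \<pi> j)^2 + e2))
      = s - sqrt (u^2 + e2) + sqrt ((u + \<delta> / real N)^2 + e2)"
    using sum_upd[OF n finite_atLeastAtMost, of "\<lambda>j y. sqrt ((y - \<pi> j)^2 + e2)" x "x n + \<delta> / real N"]
    unfolding s_def u_def by (simp add: algebra_simps)
  have "Vf C N \<pi> (x(n := x n + \<delta> / real N)) - Vf C N \<pi> x
      = real N * ((s - sqrt (u^2 + e2) + sqrt ((u + \<delta> / real N)^2 + e2))^2 - s^2)"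
  proof -
    have Vd: "Vf C N \<pi> y = real N * (\<Sum>j\<in>{1..C}. sqrt ((y j - \<pi> j)^2 + e2))^2" for y
      unfolding Vf_def e2_def ..
    show ?thesis unfolding Vd su s_def[symmetric] by (simp add: algebra_simps)
  qed
  also have "\<dots> \<le> real N * (2 * s * (u * (\<delta> / real N) / sqrt (u^2 + e2)) + s * (\<delta> / real N)^2 / sqrt e2 + (\<delta> / real N)^2)"
    using jump[OF e2 s0, of u "\<delta> / real N"] N0 by (intro mult_left_mono) auto
  also have "\<dots> = 2 * \<delta> * s * (u / sqrt (u^2 + e2)) + s * (real N * (\<delta> / real N)^2 / sqrt e2) + real N * (\<delta> / real N)^2"
    using N0 by (simp add: field_simps)
  also have "real N * (\<delta> / real N)^2 = 1 / real N" using del N0 by (auto simp: power2_eq_square)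
  also have "s * (1 / real N / sqrt e2) = s / sqrt (real N)"
  proof -
    have "sqrt e2 = 1 / sqrt (real N)" unfolding e2_def by (simp add: real_sqrt_divide)
    moreover have "sqrt (real N) * sqrt (real N) = real N" using N0 by simp
    ultimately have "real N * sqrt e2 = sqrt (real N)"
      using N0 by (metis mult.assoc mult.commute mult.right_neutral nonzero_mult_div_cancel_left
          real_sqrt_gt_zero less_irrefl mult_1 times_divide_eq_right)
    hence "1 / real N / sqrt e2 = 1 / sqrt (real N)" by (simp add: divide_divide_eq_left)
    thus ?thesis by simp
  qed
  finally show ?thesis unfolding s_def u_def e2_def .
qed

definition Kc :: "nat \<Rightarrow> nat \<Rightarrow> real \<Rightarrow> real \<Rightarrow> real" where
  "Kc C d \<sigma> \<beta> = (real C * (\<sigma> + \<bar>\<beta>\<bar> + real C) + 2 * (real C * (1 + \<sigma> * real d + real C + \<bar>\<beta>\<bar>)))^2 / 4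
      + real C * (\<sigma> + \<bar>\<beta>\<bar> + real C)"

lemma drift_abstract:
  fixes x \<pi> :: "nat \<Rightarrow> real" and C d N :: nat and \<sigma> \<beta> lm :: real
  assumes C: "C \<ge> 1" and d: "d \<ge> 1" and \<sigma>: "\<sigma> > 0" and N: "N \<ge> 1"
    and lam: "lm > 0" and lamb: "\<bar>lm - \<sigma>\<bar> \<le> \<bar>\<beta>\<bar> / sqrt (real N)" and lamle: "lm \<le> \<sigma> + \<bar>\<beta>\<bar>"
    and x0: "x 0 = 1" and xC: "x (Suc C) = 0"
    and xr: "\<And>n. n \<le> C \<Longrightarrow> 0 \<le> x n \<and> x n \<le> 1"
    and xmono: "\<And>n. n < C \<Longrightarrow> x (Suc n) \<le> x n"
    and \<pi>0: "\<pi> 0 = 1" and \<pi>C: "\<pi> (Suc C) = 0"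
    and \<pi>r: "\<And>n. n \<le> C \<Longrightarrow> 0 \<le> \<pi> n \<and> \<pi> n \<le> 1"
    and \<pi>fix: "\<forall>n\<in>{1..C}. \<sigma> * (\<pi> (n - 1) ^ d - \<pi> n ^ d) = real n * (\<pi> n - \<pi> (Suc n))"
  shows "(\<Sum>n\<in>{1..C}. (real N * lm * (x (n - 1) ^ d - x n ^ d)) * (Vf C N \<pi> (x(n := x n + 1 / real N)) - Vf C N \<pi> x))
       + (\<Sum>n\<in>{1..C}. (real n * real N * (x n - x (Suc n))) * (Vf C N \<pi> (x(n := x n - 1 / real N)) - Vf C N \<pi> x))
       \<le> - Vf C N \<pi> x + Kc C d \<sigma> \<beta>"
proof -
  define sN where "sN = sqrt (real N)"
  define e where "e = 1 / sN"
  have N0: "real N > 0" using N by simp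
  have sN0: "sN > 0" unfolding sN_def using N0 by simp
  have sN2: "sN * sN = real N" unfolding sN_def using N0 by simp
  have e0: "e > 0" unfolding e_def using sN0 by simp
  have e2: "e^2 = 1 / real N" unfolding e_def using sN2 by (simp add: power2_eq_square)
  have Ne: "real N * e = sN" unfolding e_def using sN2 sN0 by (simp add: field_simps)
  define u where "u n = x n - \<pi> n" for n
  define r where "r n = sqrt ((x n - \<pi> n)^2 + 1 / real N)" for n
  define s where "s = (\<Sum>j\<in>{1..C}. r j)"
  define \<phi> where "\<phi> n = (x n - \<pi> n) / r n" for n
  define E where "E = s / sN + 1 / real N"
  define h where "h n = x (n - 1) ^ d - x n ^ d" for n
  define g where "g n = x n - x (Suc n)" for n
  define a where "a n = real N * lm * h n" for n
  define b where "b n = real n * real N * g n" for n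
  have r_e: "r n = sqrt ((u n)^2 + e^2)" for n unfolding r_def u_def e2 ..
  have \<phi>1: "\<bar>\<phi> n\<bar> \<le> 1" for n unfolding \<phi>_def r_e u_def[symmetric] by (rule phi_le1[OF e0])
  have s0: "s \<ge> 0" unfolding s_def r_e using sq_e_pos[of "e^2"] e0
    by (intro sum_nonneg real_sqrt_ge_zero less_imp_le) auto
  have hr: "0 \<le> h n \<and> h n \<le> 1" if n: "n \<in> {1..C}" for n
  proof -
    have "x n \<le> x (n - 1)" using xmono[of "n - 1"] n by auto
    moreover have "0 \<le> x n" "x n \<le> 1" "0 \<le> x (n - 1)" "x (n - 1) \<le> 1" using xr n by auto
    ultimately have "x n ^ d \<le> x (n - 1) ^ d" "x (n - 1) ^ d \<le> 1" "0 \<le> x n ^ d"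
      by (auto intro: power_mono power_le_one)
    thus ?thesis unfolding h_def by linarith
  qed
  have gr: "0 \<le> g n \<and> g n \<le> 1" if n: "n \<in> {1..C}" for n
  proof -
    have "0 \<le> x (Suc n)" using xr[of "Suc n"] xC n by (cases "n = C") auto
    moreover have "x (Suc n) \<le> x n" using xmono[of n] xC xr[of n] n by (cases "n = C") auto
    moreover have "x n \<le> 1" using xr n by auto
    ultimately show ?thesis unfolding g_def by auto
  qed
  have a0: "0 \<le> a n" "a n \<le> real N * lm" if "n \<in> {1..C}" for n
    unfolding a_def using hr[OF that] N0 lam by (auto simp: mult_le_cancel_left1 mult_left_le)
  have b0: "0 \<le> b n" "b n \<le> real C * real N" if "n \<in> {1..C}" for n
  proof -
    show "0 \<le> b n" unfolding b_def using gr[OF that] by simp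
    have "real n * real N * g n \<le> real n * real N * 1"
      using gr[OF that] by (intro mult_left_mono) auto
    also have "\<dots> \<le> real C * real N" using that by (simp add: mult_right_mono)
    finally show "b n \<le> real C * real N" unfolding b_def .
  qed
  have up: "a n * (Vf C N \<pi> (x(n := x n + 1 / real N)) - Vf C N \<pi> x) \<le> a n * (2 * s * \<phi> n + E)"
    if n: "n \<in> {1..C}" for n
  proof -
    have "Vf C N \<pi> (x(n := x n + 1 / real N)) - Vf C N \<pi> x \<le> 2 * s * \<phi> n + E"
      using jumpV[OF N n, where \<delta>=1 and x=x and \<pi>=\<pi>] unfolding s_def r_def \<phi>_def E_def sN_def by simp
    thus ?thesis using a0(1)[OF n] by (rule mult_left_mono)
  qed
  have dn: "b n * (Vf C N \<pi> (x(n := x n - 1 / real N)) - Vf C N \<pi> x) \<le> b n * (- 2 * s * \<phi> n + E)"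
    if n: "n \<in> {1..C}" for n
  proof -
    have "Vf C N \<pi> (x(n := x n + -1 / real N)) - Vf C N \<pi> x \<le> 2 * (-1) * s * \<phi> n + E"
      using jumpV[OF N n, where \<delta>="-1" and x=x and \<pi>=\<pi>] unfolding s_def r_def \<phi>_def E_def sN_def by simp
    hence "Vf C N \<pi> (x(n := x n - 1 / real N)) - Vf C N \<pi> x \<le> - 2 * s * \<phi> n + E" by simp
    thus ?thesis using b0(1)[OF n] by (rule mult_left_mono)
  qed
  define P where "P = (\<Sum>n\<in>{1..C}. \<phi> n * (\<sigma> * h n - real n * g n))"
  define Q where "Q = (\<Sum>n\<in>{1..C}. \<phi> n * h n)"
  define U where "U = (\<Sum>n\<in>{1..C}. \<bar>u n\<bar>)"
  have P: "P \<le> - U + e * real C * (\<sigma> * real d + real C)"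
  proof -
    have "\<forall>n\<le>C. 0 \<le> x n \<and> x n \<le> 1" using xr by auto
    show ?thesis
      using key_drift[OF C d less_imp_le[OF \<sigma>] e0 x0 \<pi>0 xC \<pi>C xr \<pi>r \<pi>fix]
      unfolding P_def U_def \<phi>_def r_e u_def h_def g_def by simp
  qed
  have Q: "\<bar>Q\<bar> \<le> real C"
  proof -
    have "\<bar>Q\<bar> \<le> (\<Sum>n\<in>{1..C}. \<bar>\<phi> n * h n\<bar>)" unfolding Q_def by (rule sum_abs)
    also have "\<dots> \<le> (\<Sum>n\<in>{1..C}. 1)"
    proof (rule sum_mono)
      fix n assume n: "n \<in> {1..C}"
      have "\<bar>\<phi> n * h n\<bar> = \<bar>\<phi> n\<bar> * h n" using hr[OF n] by (simp add: abs_mult)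
      also have "\<dots> \<le> 1 * 1" using hr[OF n] \<phi>1[of n] by (intro mult_mono) auto
      finally show "\<bar>\<phi> n * h n\<bar> \<le> 1" by simp
    qed
    finally show ?thesis by simp
  qed
  have U: "s - real C * e \<le> U"
  proof -
    have "s \<le> (\<Sum>n\<in>{1..C}. \<bar>u n\<bar> + e)" unfolding s_def r_e
      by (rule sum_mono) (rule sqrt_facts(3)[OF e0])
    thus ?thesis unfolding U_def by (simp add: sum.distrib)
  qed
  have lb: "(lm - \<sigma>) * Q \<le> \<bar>\<beta>\<bar> * e * real C"
  proof -
    have "(lm - \<sigma>) * Q \<le> \<bar>lm - \<sigma>\<bar> * \<bar>Q\<bar>" by (metis abs_ge_self abs_mult)
    also have "\<dots> \<le> (\<bar>\<beta>\<bar> * e) * real C"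
      using lamb Q unfolding e_def sN_def by (intro mult_mono) auto
    finally show ?thesis .
  qed
  define M where "M = real C * (1 + \<sigma> * real d + real C + \<bar>\<beta>\<bar>)"
  have PQ: "P + (lm - \<sigma>) * Q \<le> - s + e * M"
    using P U lb unfolding M_def by (simp add: algebra_simps)
  have sumab: "(\<Sum>n\<in>{1..C}. a n + b n) \<le> real C * (real N * (lm + real C))"
  proof -
    have "(\<Sum>n\<in>{1..C}. a n + b n) \<le> (\<Sum>n\<in>{1..C}. real N * (lm + real C))"
    proof (rule sum_mono)
      fix n assume n: "n \<in> {1..C}"
      have "a n + b n \<le> real N * lm + real C * real N" using a0(2)[OF n] b0(2)[OF n] by (rule add_mono)
      thus "a n + b n \<le> real N * (lm + real C)" by (simp add: algebra_simps)
    qed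
    thus ?thesis by simp
  qed
  have phab: "(\<Sum>n\<in>{1..C}. \<phi> n * (a n - b n)) = real N * (P + (lm - \<sigma>) * Q)"
  proof -
    have "(\<Sum>n\<in>{1..C}. \<phi> n * (a n - b n))
        = (\<Sum>n\<in>{1..C}. real N * (\<phi> n * (\<sigma> * h n - real n * g n)) + (real N * (lm - \<sigma>)) * (\<phi> n * h n))"
      by (rule sum.cong[OF refl]) (simp add: a_def b_def algebra_simps)
    also have "\<dots> = real N * P + (real N * (lm - \<sigma>)) * Q"
      unfolding P_def Q_def by (simp only: sum.distrib sum_distrib_left)
    finally show ?thesis by (simp add: algebra_simps)
  qed
  have "(\<Sum>n\<in>{1..C}. (real N * lm * (x (n - 1) ^ d - x n ^ d)) * (Vf C N \<pi> (x(n := x n + 1 / real N)) - Vf C N \<pi> x))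
       + (\<Sum>n\<in>{1..C}. (real n * real N * (x n - x (Suc n))) * (Vf C N \<pi> (x(n := x n - 1 / real N)) - Vf C N \<pi> x))
      \<le> (\<Sum>n\<in>{1..C}. a n * (2 * s * \<phi> n + E)) + (\<Sum>n\<in>{1..C}. b n * (- 2 * s * \<phi> n + E))"
    using up dn unfolding a_def[symmetric] b_def[symmetric] h_def[symmetric] g_def[symmetric]
    by (intro add_mono sum_mono) (auto simp: a_def b_def h_def g_def)
  also have "\<dots> = 2 * s * (\<Sum>n\<in>{1..C}. \<phi> n * (a n - b n)) + E * (\<Sum>n\<in>{1..C}. a n + b n)"
  proof -
    have "(\<Sum>n\<in>{1..C}. a n * (2 * s * \<phi> n + E)) + (\<Sum>n\<in>{1..C}. b n * (- 2 * s * \<phi> n + E))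
        = (\<Sum>n\<in>{1..C}. (2 * s) * (\<phi> n * (a n - b n)) + E * (a n + b n))"
      by (simp only: sum.distrib[symmetric]) (rule sum.cong[OF refl], simp add: algebra_simps)
    also have "\<dots> = 2 * s * (\<Sum>n\<in>{1..C}. \<phi> n * (a n - b n)) + E * (\<Sum>n\<in>{1..C}. a n + b n)"
      unfolding sum_distrib_left by (rule sum.distrib)
    finally show ?thesis .
  qed
  also have "\<dots> = 2 * s * real N * (P + (lm - \<sigma>) * Q) + E * (\<Sum>n\<in>{1..C}. a n + b n)"
    unfolding phab by simp
  also have "\<dots> \<le> 2 * s * real N * (- s + e * M) + E * (real C * (real N * (lm + real C)))"
  proof (rule add_mono)
    show "2 * s * real N * (P + (lm - \<sigma>) * Q) \<le> 2 * s * real N * (- s + e * M)"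
      using PQ s0 N0 by (intro mult_left_mono) auto
    have "E \<ge> 0" unfolding E_def using s0 sN0 N0 by simp
    thus "E * (\<Sum>n\<in>{1..C}. a n + b n) \<le> E * (real C * (real N * (lm + real C)))"
      using sumab by (rule mult_left_mono[rotated])
  qed
  also have "\<dots> = - 2 * real N * s^2 + 2 * s * sN * M + real C * (lm + real C) * (s * sN + 1)"
  proof -
    have "2 * s * real N * (- s + e * M) = - 2 * real N * s^2 + 2 * s * (real N * e) * M"
      by (simp add: algebra_simps power2_eq_square)
    moreover have "E * (real C * (real N * (lm + real C))) = real C * (lm + real C) * (s * sN + 1)"
    proof -
      have "E * real N = s * sN + 1" unfolding E_def using sN2 sN0 N0 by (simp add: field_simps)
      have "E * (real C * (real N * (lm + real C))) = (E * real N) * (real C * (lm + real C))"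
        by (simp only: ac_simps)
      also have "\<dots> = (s * sN + 1) * (real C * (lm + real C))" unfolding \<open>E * real N = s * sN + 1\<close> ..
      finally show ?thesis by (simp only: ac_simps)
    qed
    ultimately show ?thesis unfolding Ne by simp
  qed
  also have "\<dots> \<le> - 2 * real N * s^2 + 2 * s * sN * M + real C * (\<sigma> + \<bar>\<beta>\<bar> + real C) * (s * sN + 1)"
    using lamle s0 sN0 by (intro add_left_mono mult_right_mono mult_left_mono) auto
  also have "\<dots> \<le> - real N * s^2 + Kc C d \<sigma> \<beta>"
  proof -
    define K3 where "K3 = real C * (\<sigma> + \<bar>\<beta>\<bar> + real C) + 2 * M"
    have "0 \<le> (sN * s - K3 / 2)^2" by simp
    hence "s * sN * K3 \<le> (sN * sN) * s^2 + K3^2 / 4" by (simp add: power2_eq_square algebra_simps)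
    hence "s * sN * K3 \<le> real N * s^2 + K3^2 / 4" unfolding sN2 .
    thus ?thesis unfolding Kc_def K3_def M_def by (simp add: algebra_simps)
  qed
  also have "- real N * s^2 = - Vf C N \<pi> x" unfolding Vf_def s_def r_def by simp
  finally show ?thesis .
qed



lemma states_props:
  assumes "m \<in> states C N"
  shows "m 0 = N" "\<And>n. m (Suc n) \<le> m n" "\<And>n. n > C \<Longrightarrow> m n = 0" "\<And>n. m n \<le> N"
proof -
  show m0: "m 0 = N" using assms by (simp add: states_def)
  show ms: "m (Suc n) \<le> m n" for n
    using assms unfolding states_def by (cases "n < C") auto
  show "\<And>n. n > C \<Longrightarrow> m n = 0" using assms by (simp add: states_def)
  show "m n \<le> N" for n using lift_Suc_antimono_le[of m 0 n, OF ms] m0 by simp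
qed

lemma finite_states: "finite (states C N)"
proof -
  have "states C N \<subseteq> (\<lambda>f n. if n \<le> C then f n else 0) ` (PiE {..C} (\<lambda>_. {..N}))"
  proof
    fix m assume m: "m \<in> states C N"
    have "m = (\<lambda>n. if n \<le> C then (restrict m {..C}) n else 0)"
      using states_props(3)[OF m] by (auto simp: fun_eq_iff)
    moreover have "restrict m {..C} \<in> PiE {..C} (\<lambda>_. {..N})" using states_props(4)[OF m] by auto
    ultimately show "m \<in> (\<lambda>f n. if n \<le> C then f n else 0) ` (PiE {..C} (\<lambda>_. {..N}))" by blast
  qed
  moreover have "finite (PiE {..C} (\<lambda>_. {..N::nat}))" by (intro finite_PiE) auto
  ultimately show ?thesis by (rule finite_subset[OF _ finite_imageI])
qed

lemma up_in_states:
  assumes m: "m \<in> states C N" and n: "n \<in> {1..C}" and lt: "m n < m (n - 1)"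
  shows "m(n := Suc (m n)) \<in> states C N"
proof -
  have ms: "\<And>k. m (Suc k) \<le> m k" by (rule states_props(2)[OF m])
  have "(m(n := Suc (m n))) (Suc k) \<le> (m(n := Suc (m n))) k" for k
  proof (cases "Suc k = n")
    case True thus ?thesis using lt by auto
  next
    case False
    thus ?thesis using ms[of k] by (cases "k = n") auto
  qed
  thus ?thesis using m n unfolding states_def by auto
qed

lemma down_in_states:
  assumes m: "m \<in> states C N" and n: "n \<in> {1..C}" and lt: "m (Suc n) < m n"
  shows "m(n := m n - 1) \<in> states C N"
proof -
  have ms: "\<And>k. m (Suc k) \<le> m k" by (rule states_props(2)[OF m])
  have "(m(n := m n - 1)) (Suc k) \<le> (m(n := m n - 1)) k" for k
  proof (cases "Suc k = n")
    case True thus ?thesis using ms[of k] by auto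
  next
    case False
    thus ?thesis using ms[of k] lt by (cases "k = n") auto
  qed
  thus ?thesis using m n unfolding states_def by auto
qed

lemma sum_delta_if:
  assumes "finite S"
  shows "(\<Sum>m'\<in>S. (if P \<and> m' = t then c else 0) * (F m' :: real)) = (if P \<and> t \<in> S then c * F t else 0)"
proof -
  have "(\<Sum>m'\<in>S. (if P \<and> m' = t then c else 0) * F m') = (\<Sum>m'\<in>S. if m' = t then (if P then c * F t else 0) else 0)"
    by (rule sum.cong) auto
  also have "\<dots> = (if t \<in> S then (if P then c * F t else 0) else 0)" using assms by (rule sum.delta)
  finally show ?thesis by auto
qed

lemma gen_expand:
  assumes m: "m \<in> states C N"
  shows "(\<Sum>m'\<in>states C N. rate C d \<sigma> \<beta> N m m' * (f m' - f m)) =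
    (\<Sum>n\<in>{1..C}. (if m n < m (n - 1) then real N * lam \<sigma> \<beta> N *
             ((real (m (n - 1)) / real N) ^ d - (real (m n) / real N) ^ d) else 0) * (f (m(n := Suc (m n))) - f m))
  + (\<Sum>n\<in>{1..C}. (if m (Suc n) < m n then real n * (real (m n) - real (m (Suc n))) else 0) * (f (m(n := m n - 1)) - f m))"
proof -
  define S where "S = states C N"
  have fin: "finite S" unfolding S_def by (rule finite_states)
  define F where "F m' = f m' - f m" for m'
  define ca where "ca n = real N * lam \<sigma> \<beta> N * ((real (m (n - 1)) / real N) ^ d - (real (m n) / real N) ^ d)" for n
  define cd where "cd n = real n * (real (m n) - real (m (Suc n)))" for n
  have "(\<Sum>m'\<in>S. rate C d \<sigma> \<beta> N m m' * F m')
     = (\<Sum>m'\<in>S. (\<Sum>n\<in>{1..C}. (if m n < m (n - 1) \<and> m' = m(n := Suc (m n)) then ca n else 0) * F m')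
              + (\<Sum>n\<in>{1..C}. (if m (Suc n) < m n \<and> m' = m(n := m n - 1) then cd n else 0) * F m'))"
    unfolding rate_def ca_def cd_def by (intro sum.cong refl) (simp only: distrib_right sum_distrib_right)
  also have "\<dots> = (\<Sum>n\<in>{1..C}. \<Sum>m'\<in>S. (if m n < m (n - 1) \<and> m' = m(n := Suc (m n)) then ca n else 0) * F m')
              + (\<Sum>n\<in>{1..C}. \<Sum>m'\<in>S. (if m (Suc n) < m n \<and> m' = m(n := m n - 1) then cd n else 0) * F m')"
    by (simp only: sum.distrib) (rule arg_cong2[where f="(+)"]; rule sum.swap)
  also have "\<dots> = (\<Sum>n\<in>{1..C}. (if m n < m (n - 1) then ca n else 0) * F (m(n := Suc (m n))))
              + (\<Sum>n\<in>{1..C}. (if m (Suc n) < m n then cd n else 0) * F (m(n := m n - 1)))"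
  proof (intro arg_cong2[where f="(+)"] sum.cong refl)
    fix n assume n: "n \<in> {1..C}"
    show "(\<Sum>m'\<in>S. (if m n < m (n - 1) \<and> m' = m(n := Suc (m n)) then ca n else 0) * F m')
        = (if m n < m (n - 1) then ca n else 0) * F (m(n := Suc (m n)))"
      unfolding sum_delta_if[OF fin] using up_in_states[OF m n] unfolding S_def by auto
    show "(\<Sum>m'\<in>S. (if m (Suc n) < m n \<and> m' = m(n := m n - 1) then cd n else 0) * F m')
        = (if m (Suc n) < m n then cd n else 0) * F (m(n := m n - 1))"
      unfolding sum_delta_if[OF fin] using down_in_states[OF m n] unfolding S_def by auto
  qed
  finally show ?thesis unfolding S_def F_def ca_def cd_def .
qed

lemma pi_range:
  fixes \<pi> :: "nat \<Rightarrow> real"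
  assumes \<pi>0: "\<pi> 0 = 1" and \<pi>mono: "\<forall>n<C. \<pi> (Suc n) \<le> \<pi> n" and \<pi>nonneg: "\<pi> C \<ge> 0"
    and n: "n \<le> C"
  shows "0 \<le> \<pi> n \<and> \<pi> n \<le> 1"
proof -
  have anti: "\<pi> j \<le> \<pi> i" if "i \<le> j" "j \<le> C" for i j
    using that
  proof (induction j)
    case 0 thus ?case by simp
  next
    case (Suc j)
    show ?case
    proof (cases "i = Suc j")
      case True thus ?thesis by simp
    next
      case False
      hence "i \<le> j" using Suc.prems by simp
      hence "\<pi> j \<le> \<pi> i" using Suc by simp
      moreover have "\<pi> (Suc j) \<le> \<pi> j" using \<pi>mono Suc.prems by simp
      ultimately show ?thesis by simp
    qed
  qed
  show ?thesis using anti[of 0 n] anti[of n C] n \<pi>0 \<pi>nonneg by simp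
qed

definition VV :: "nat \<Rightarrow> nat \<Rightarrow> (nat \<Rightarrow> real) \<Rightarrow> (nat \<Rightarrow> nat) \<Rightarrow> real" where
  "VV C N \<pi> m = Vf C N \<pi> (\<lambda>n. real (m n) / real N)"

lemma lam_facts:
  assumes N: "N \<ge> 1"
  shows "\<bar>lam \<sigma> \<beta> N - \<sigma>\<bar> \<le> \<bar>\<beta>\<bar> / sqrt (real N)" "lam \<sigma> \<beta> N \<le> \<sigma> + \<bar>\<beta>\<bar>"
proof -
  have s1: "sqrt (real N) \<ge> 1" using N by simp
  show "\<bar>lam \<sigma> \<beta> N - \<sigma>\<bar> \<le> \<bar>\<beta>\<bar> / sqrt (real N)" unfolding lam_def by (simp add: abs_div)
  have "- \<beta> / sqrt (real N) \<le> \<bar>\<beta>\<bar> / sqrt (real N)" using s1 by (intro divide_right_mono) auto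
  also have "\<dots> \<le> \<bar>\<beta>\<bar>" using s1 by (simp add: divide_le_eq mult_le_cancel_left1)
  finally show "lam \<sigma> \<beta> N \<le> \<sigma> + \<bar>\<beta>\<bar>" unfolding lam_def by simp
qed

lemma gen_drift:
  fixes \<pi> :: "nat \<Rightarrow> real"
  assumes C: "C \<ge> 1" and d: "d \<ge> 1" and \<sigma>: "\<sigma> > 0" and N: "N \<ge> 1" and lam: "lam \<sigma> \<beta> N > 0"
    and \<pi>0: "\<pi> 0 = 1"
    and \<pi>mono: "\<forall>n<C. \<pi> (Suc n) \<le> \<pi> n"
    and \<pi>nonneg: "\<pi> C \<ge> 0"
    and \<pi>top: "\<pi> (Suc C) = 0"
    and \<pi>fix: "\<forall>n\<in>{1..C}. \<sigma> * (\<pi> (n - 1) ^ d - \<pi> n ^ d) = real n * (\<pi> n - \<pi> (Suc n))"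
    and m: "m \<in> states C N"
  shows "(\<Sum>m'\<in>states C N. rate C d \<sigma> \<beta> N m m' * (VV C N \<pi> m' - VV C N \<pi> m)) \<le> - VV C N \<pi> m + Kc C d \<sigma> \<beta>"
proof -
  define x where "x n = real (m n) / real N" for n
  define lm where "lm = lam \<sigma> \<beta> N"
  have N0: "real N > 0" using N by simp
  have ms: "\<And>k. m (Suc k) \<le> m k" by (rule states_props(2)[OF m])
  have xVV: "VV C N \<pi> m = Vf C N \<pi> x" unfolding VV_def x_def ..
  have A: "(if m n < m (n - 1) then real N * lm * ((real (m (n - 1)) / real N) ^ d - (real (m n) / real N) ^ d) else 0)
          * (VV C N \<pi> (m(n := Suc (m n))) - VV C N \<pi> m)
        = (real N * lm * (x (n - 1) ^ d - x n ^ d)) * (Vf C N \<pi> (x(n := x n + 1 / real N)) - Vf C N \<pi> x)"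
    if n: "n \<in> {1..C}" for n
  proof (cases "m n < m (n - 1)")
    case True
    have "(\<lambda>k. real ((m(n := Suc (m n))) k) / real N) = x(n := x n + 1 / real N)"
      unfolding x_def by (auto simp: fun_eq_iff add_divide_distrib)
    thus ?thesis using True unfolding VV_def x_def by simp
  next
    case False
    have "m n \<le> m (n - 1)" using ms[of "n - 1"] n by simp
    hence "m n = m (n - 1)" using False by simp
    thus ?thesis using False unfolding x_def by simp
  qed
  have D: "(if m (Suc n) < m n then real n * (real (m n) - real (m (Suc n))) else 0)
          * (VV C N \<pi> (m(n := m n - 1)) - VV C N \<pi> m)
        = (real n * real N * (x n - x (Suc n))) * (Vf C N \<pi> (x(n := x n - 1 / real N)) - Vf C N \<pi> x)"
    if n: "n \<in> {1..C}" for n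
  proof (cases "m (Suc n) < m n")
    case True
    hence "m n \<ge> 1" by simp
    hence "(\<lambda>k. real ((m(n := m n - 1)) k) / real N) = x(n := x n - 1 / real N)"
      unfolding x_def by (auto simp: fun_eq_iff diff_divide_distrib of_nat_diff)
    moreover have "real n * (real (m n) - real (m (Suc n))) = real n * real N * (x n - x (Suc n))"
      unfolding x_def using N0 by (simp add: field_simps)
    ultimately show ?thesis using True unfolding VV_def x_def by simp
  next
    case False
    hence "m (Suc n) = m n" using ms[of n] by simp
    thus ?thesis using False unfolding x_def by simp
  qed
  have "(\<Sum>m'\<in>states C N. rate C d \<sigma> \<beta> N m m' * (VV C N \<pi> m' - VV C N \<pi> m))
     = (\<Sum>n\<in>{1..C}. (real N * lm * (x (n - 1) ^ d - x n ^ d)) * (Vf C N \<pi> (x(n := x n + 1 / real N)) - Vf C N \<pi> x))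
       + (\<Sum>n\<in>{1..C}. (real n * real N * (x n - x (Suc n))) * (Vf C N \<pi> (x(n := x n - 1 / real N)) - Vf C N \<pi> x))"
    unfolding gen_expand[OF m] lm_def[symmetric] using A D by simp
  also have "\<dots> \<le> - Vf C N \<pi> x + Kc C d \<sigma> \<beta>"
  proof (rule drift_abstract[OF C d \<sigma> N])
    show "lm > 0" using lam lm_def by simp
    show "\<bar>lm - \<sigma>\<bar> \<le> \<bar>\<beta>\<bar> / sqrt (real N)" "lm \<le> \<sigma> + \<bar>\<beta>\<bar>" using lam_facts[OF N] lm_def by auto
    show "x 0 = 1" unfolding x_def using states_props(1)[OF m] N0 by simp
    show "x (Suc C) = 0" unfolding x_def using states_props(3)[OF m, of "Suc C"] by simp
    show "0 \<le> x n \<and> x n \<le> 1" for n unfolding x_def using states_props(4)[OF m, of n] N0 by simp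
    show "x (Suc n) \<le> x n" for n unfolding x_def using ms[of n] N0 by (simp add: divide_right_mono)
    show "\<pi> 0 = 1" "\<pi> (Suc C) = 0" by fact+
    show "0 \<le> \<pi> n \<and> \<pi> n \<le> 1" if "n \<le> C" for n using pi_range[OF \<pi>0 \<pi>mono \<pi>nonneg that] .
    show "\<forall>n\<in>{1..C}. \<sigma> * (\<pi> (n - 1) ^ d - \<pi> n ^ d) = real n * (\<pi> n - \<pi> (Suc n))" by fact
  qed
  finally show ?thesis unfolding xVV .
qed

lemma sum_sq_upper:
  fixes a :: "nat \<Rightarrow> real" assumes "finite A"
  shows "(\<Sum>i\<in>A. a i)^2 \<le> real (card A) * (\<Sum>i\<in>A. (a i)^2)"
proof -
  have "(\<Sum>i\<in>A. a i)^2 = (\<Sum>i\<in>A. \<Sum>j\<in>A. a i * a j)"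
    by (simp add: power2_eq_square sum_product)
  also have "\<dots> \<le> (\<Sum>i\<in>A. \<Sum>j\<in>A. ((a i)^2 + (a j)^2) / 2)"
    by (intro sum_mono) (use sum_squares_bound in \<open>auto simp: power2_eq_square field_simps\<close>)
  also have "\<dots> = real (card A) * (\<Sum>i\<in>A. (a i)^2)"
    by (simp add: sum.distrib add_divide_distrib sum_divide_distrib[symmetric] sum_distrib_left[symmetric] algebra_simps)
  finally show ?thesis .
qed

lemma sum_sq_lower:
  fixes a :: "nat \<Rightarrow> real" assumes "finite A" "\<And>i. i \<in> A \<Longrightarrow> a i \<ge> 0"
  shows "(\<Sum>i\<in>A. (a i)^2) \<le> (\<Sum>i\<in>A. a i)^2"
proof -
  have "(\<Sum>i\<in>A. (a i)^2) \<le> (\<Sum>i\<in>A. a i * (\<Sum>j\<in>A. a j))"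
  proof (rule sum_mono)
    fix i assume i: "i \<in> A"
    have "a i \<le> (\<Sum>j\<in>A. a j)" using assms i by (intro member_le_sum) auto
    thus "(a i)^2 \<le> a i * (\<Sum>j\<in>A. a j)" using assms(2)[OF i] by (simp add: power2_eq_square mult_left_mono)
  qed
  also have "\<dots> = (\<Sum>i\<in>A. a i)^2" by (simp add: power2_eq_square sum_distrib_right)
  finally show ?thesis .
qed

lemma VV_sq_dev:
  fixes \<pi> :: "nat \<Rightarrow> real"
  assumes m: "m \<in> states C N" and N: "N \<ge> 1" and \<pi>0: "\<pi> 0 = 1"
  shows "sq_dev C \<pi> N m \<le> VV C N \<pi> m" "VV C N \<pi> m \<le> real C * sq_dev C \<pi> N m + (real C)^2"
proof -
  define u where "u n = real (m n) / real N - \<pi> n" for n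
  define r where "r n = sqrt ((u n)^2 + 1 / real N)" for n
  have N0: "real N > 0" using N by simp
  have r2: "(r n)^2 = (u n)^2 + 1 / real N" for n
    unfolding r_def using N0 by (simp add: add_nonneg_nonneg)
  have r0: "r n \<ge> 0" for n unfolding r_def using N0 by (simp add: add_nonneg_nonneg)
  have u0: "u 0 = 0" unfolding u_def using states_props(1)[OF m] \<pi>0 N0 by simp
  have sd: "sq_dev C \<pi> N m = real N * (\<Sum>n\<in>{1..C}. (u n)^2)"
  proof -
    have "{..C} = insert 0 {1..C}" by auto
    thus ?thesis unfolding sq_dev_def u_def[symmetric] using u0 by simp
  qed
  have VVr: "VV C N \<pi> m = real N * (\<Sum>n\<in>{1..C}. r n)^2"
    unfolding VV_def Vf_def r_def u_def ..
  have "(\<Sum>n\<in>{1..C}. (u n)^2) \<le> (\<Sum>n\<in>{1..C}. (r n)^2)"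
    using N0 by (intro sum_mono) (simp add: r2)
  also have "\<dots> \<le> (\<Sum>n\<in>{1..C}. r n)^2" by (rule sum_sq_lower) (auto simp: r0)
  finally show "sq_dev C \<pi> N m \<le> VV C N \<pi> m" unfolding sd VVr using N0 by simp
  have "(\<Sum>n\<in>{1..C}. r n)^2 \<le> real C * (\<Sum>n\<in>{1..C}. (r n)^2)"
    using sum_sq_upper[of "{1..C}" r] by simp
  also have "\<dots> = real C * (\<Sum>n\<in>{1..C}. (u n)^2) + real C * real C / real N"
    by (simp add: r2 sum.distrib algebra_simps)
  finally have "real N * (\<Sum>n\<in>{1..C}. r n)^2 \<le> real N * (real C * (\<Sum>n\<in>{1..C}. (u n)^2) + real C * real C / real N)"
    using N0 by simp
  also have "\<dots> = real C * (real N * (\<Sum>n\<in>{1..C}. (u n)^2)) + (real C)^2"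
    using N0 by (simp add: field_simps power2_eq_square)
  finally show "VV C N \<pi> m \<le> real C * sq_dev C \<pi> N m + (real C)^2" unfolding sd VVr .
qed

lemma rate_nonneg:
  assumes m: "m \<in> states C N" and lam: "lam \<sigma> \<beta> N > 0"
  shows "rate C d \<sigma> \<beta> N m m' \<ge> 0"
proof -
  have ms: "\<And>k. m (Suc k) \<le> m k" by (rule states_props(2)[OF m])
  have "(real (m n) / real N) ^ d \<le> (real (m (n - 1)) / real N) ^ d" if "n \<ge> 1" for n
  proof -
    have "m n \<le> m (n - 1)" using ms[of "n - 1"] that by simp
    thus ?thesis by (intro power_mono divide_right_mono) auto
  qed
  thus ?thesis unfolding rate_def using lam
    by (intro add_nonneg_nonneg sum_nonneg) (auto intro!: mult_nonneg_nonneg)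
qed

lemma law_bound:
  fixes \<pi> :: "nat \<Rightarrow> real"
  assumes C: "C \<ge> 1" and d: "d \<ge> 1" and \<sigma>: "\<sigma> > 0" and N: "N \<ge> 1" and lam: "lam \<sigma> \<beta> N > 0"
    and \<pi>0: "\<pi> 0 = 1"
    and \<pi>mono: "\<forall>n<C. \<pi> (Suc n) \<le> \<pi> n"
    and \<pi>nonneg: "\<pi> C \<ge> 0"
    and \<pi>top: "\<pi> (Suc C) = 0"
    and \<pi>fix: "\<forall>n\<in>{1..C}. \<sigma> * (\<pi> (n - 1) ^ d - \<pi> n ^ d) = real n * (\<pi> n - \<pi> (Suc n))"
    and dist: "is_distr (states C N) \<mu>" and law: "law_process C d \<sigma> \<beta> N \<mu> p"
    and t: "t \<ge> 0"
  shows "expect (states C N) (p t) (sq_dev C \<pi> N)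
      \<le> max (real C * expect (states C N) \<mu> (sq_dev C \<pi> N) + (real C)^2) (Kc C d \<sigma> \<beta>)"
proof -
  define S where "S = states C N"
  define r where "r = rate C d \<sigma> \<beta> N"
  define V where "V = VV C N \<pi>"
  define K where "K = Kc C d \<sigma> \<beta>"
  have fin: "finite S" unfolding S_def by (rule finite_states)
  have p0: "p 0 = \<mu>" using law unfolding law_process_def by simp
  have der: "\<And>t m. t \<ge> 0 \<Longrightarrow> m \<in> S \<Longrightarrow> ((\<lambda>s. p s m) has_real_derivative
           ((\<Sum>m'\<in>S. p t m' * r m' m) - p t m * (\<Sum>m'\<in>S. r m m'))) (at t within {0..})"
    using law unfolding law_process_def S_def r_def by blast
  have pos: "p s m \<ge> 0" if "s \<ge> 0" "m \<in> S" for s m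
  proof (rule positivity[OF fin _ der _ that])
    show "\<And>a b. a \<in> S \<Longrightarrow> b \<in> S \<Longrightarrow> 0 \<le> r a b" unfolding r_def S_def using rate_nonneg[OF _ lam] by blast
    show "\<And>m. m \<in> S \<Longrightarrow> 0 \<le> p 0 m" using dist p0 unfolding is_distr_def by simp
  qed
  have mass: "(\<Sum>m\<in>S. p s m) = 1" if s: "s \<ge> 0" for s
  proof -
    define f where "f s = (\<Sum>m\<in>S. p s m * 1)" for s
    have df: "(f has_real_derivative 0) (at s within {0..})" if "s \<ge> 0" for s
      using expect_deriv[OF fin der[OF that], of "\<lambda>_. 1"] unfolding f_def by simp
    have "f s \<le> f 0 * exp (0 * s)" using gronwall0[where f=f and f'="\<lambda>_. 0" and L=0, OF df _ s] by simp
    moreover have "- f s \<le> - f 0 * exp (0 * s)"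
      using gronwall0[where f="\<lambda>s. - f s" and f'="\<lambda>_. 0" and L=0, OF DERIV_minus[OF df, simplified] _ s] by simp
    ultimately have "f s = f 0" by simp
    also have "f 0 = 1" unfolding f_def using dist p0 unfolding is_distr_def S_def by simp
    finally show ?thesis unfolding f_def by simp
  qed
  have drift: "(\<Sum>m'\<in>S. r m m' * (V m' - V m)) \<le> - V m + K" if "m \<in> S" for m
    unfolding r_def V_def K_def S_def
    by (rule gen_drift[OF C d \<sigma> N lam \<pi>0 \<pi>mono \<pi>nonneg \<pi>top \<pi>fix]) (use that S_def in simp)
  define f where "f s = (\<Sum>m\<in>S. p s m * V m) - K" for s
  have df: "(f has_real_derivative (\<Sum>m\<in>S. p s m * (\<Sum>m'\<in>S. r m m' * (V m' - V m)))) (at s within {0..})"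
    if "s \<ge> 0" for s
    unfolding f_def using expect_deriv[OF fin der[OF that], of V] by (rule DERIV_diff[OF _ DERIV_const, simplified])
  have dfle: "(\<Sum>m\<in>S. p s m * (\<Sum>m'\<in>S. r m m' * (V m' - V m))) \<le> (-1) * f s" if s: "s \<ge> 0" for s
  proof -
    have "(\<Sum>m\<in>S. p s m * (\<Sum>m'\<in>S. r m m' * (V m' - V m))) \<le> (\<Sum>m\<in>S. p s m * (- V m + K))"
      by (intro sum_mono mult_left_mono drift pos s)
    also have "\<dots> = - (\<Sum>m\<in>S. p s m * V m) + K * (\<Sum>m\<in>S. p s m)"
    proof -
      have "(\<Sum>m\<in>S. p s m * (- V m + K)) = (\<Sum>m\<in>S. - (p s m * V m) + K * p s m)"
        by (rule sum.cong) (auto simp: algebra_simps)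
      also have "\<dots> = - (\<Sum>m\<in>S. p s m * V m) + K * (\<Sum>m\<in>S. p s m)"
        by (simp only: sum.distrib sum_negf sum_distrib_left)
      finally show ?thesis .
    qed
    also have "\<dots> = (-1) * f s" unfolding mass[OF s] f_def by simp
    finally show ?thesis .
  qed
  have "f t \<le> f 0 * exp ((-1) * t)" by (rule gronwall0[OF df dfle t])
  also have "\<dots> \<le> max (f 0) 0"
  proof (cases "f 0 \<ge> 0")
    case True
    have "exp ((-1) * t) \<le> 1" using t by simp
    thus ?thesis using True by (simp add: mult_left_le)
  next
    case False thus ?thesis by (simp add: mult_nonpos_nonneg)
  qed
  finally have ft: "(\<Sum>m\<in>S. p t m * V m) \<le> max (\<Sum>m\<in>S. \<mu> m * V m) K"
    unfolding f_def p0 by linarith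
  have sq1: "sq_dev C \<pi> N m \<le> V m" if "m \<in> S" for m
    using VV_sq_dev(1)[of m C N \<pi>] N \<pi>0 that unfolding S_def V_def by blast
  have sq2: "V m \<le> real C * sq_dev C \<pi> N m + (real C)^2" if "m \<in> S" for m
    using VV_sq_dev(2)[of m C N \<pi>] N \<pi>0 that unfolding S_def V_def by blast
  have "expect S (p t) (sq_dev C \<pi> N) \<le> (\<Sum>m\<in>S. p t m * V m)"
    unfolding expect_def by (intro sum_mono mult_left_mono sq1 pos[OF t])
  also note ft
  also have "(\<Sum>m\<in>S. \<mu> m * V m) \<le> (\<Sum>m\<in>S. \<mu> m * (real C * sq_dev C \<pi> N m + (real C)^2))"
    using dist unfolding is_distr_def by (intro sum_mono mult_left_mono sq2) auto
  also have "\<dots> = real C * expect S \<mu> (sq_dev C \<pi> N) + (real C)^2 * (\<Sum>m\<in>S. \<mu> m)"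
    unfolding expect_def by (simp add: sum.distrib sum_distrib_left sum_distrib_right algebra_simps)
  also have "(\<Sum>m\<in>S. \<mu> m) = 1" using dist unfolding is_distr_def S_def by simp
  finally show ?thesis unfolding S_def K_def by simp
qed

lemma stat_bound:
  fixes \<pi> :: "nat \<Rightarrow> real"
  assumes C: "C \<ge> 1" and d: "d \<ge> 1" and \<sigma>: "\<sigma> > 0" and N: "N \<ge> 1" and lam: "lam \<sigma> \<beta> N > 0"
    and \<pi>0: "\<pi> 0 = 1"
    and \<pi>mono: "\<forall>n<C. \<pi> (Suc n) \<le> \<pi> n"
    and \<pi>nonneg: "\<pi> C \<ge> 0"
    and \<pi>top: "\<pi> (Suc C) = 0"
    and \<pi>fix: "\<forall>n\<in>{1..C}. \<sigma> * (\<pi> (n - 1) ^ d - \<pi> n ^ d) = real n * (\<pi> n - \<pi> (Suc n))"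
    and st: "stationary C d \<sigma> \<beta> N \<nu>"
  shows "expect (states C N) \<nu> (sq_dev C \<pi> N) \<le> Kc C d \<sigma> \<beta>"
proof -
  define S where "S = states C N"
  define r where "r = rate C d \<sigma> \<beta> N"
  define V where "V = VV C N \<pi>"
  define K where "K = Kc C d \<sigma> \<beta>"
  have fin: "finite S" unfolding S_def by (rule finite_states)
  have dist: "is_distr S \<nu>" and bal: "\<And>m. m \<in> S \<Longrightarrow> (\<Sum>m'\<in>S. \<nu> m' * r m' m) = \<nu> m * (\<Sum>m'\<in>S. r m m')"
    using st unfolding stationary_def S_def r_def by auto
  have drift: "(\<Sum>m'\<in>S. r m m' * (V m' - V m)) \<le> - V m + K" if "m \<in> S" for m
    unfolding r_def V_def K_def S_def
    by (rule gen_drift[OF C d \<sigma> N lam \<pi>0 \<pi>mono \<pi>nonneg \<pi>top \<pi>fix]) (use that S_def in simp)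
  have zero: "(\<Sum>m\<in>S. \<nu> m * (\<Sum>m'\<in>S. r m m' * (V m' - V m))) = 0"
    unfolding gen_identity[OF fin, symmetric] using bal by simp
  have "0 \<le> (\<Sum>m\<in>S. \<nu> m * (- V m + K)) - (\<Sum>m\<in>S. \<nu> m * (\<Sum>m'\<in>S. r m m' * (V m' - V m)))"
    using dist unfolding is_distr_def
    by (simp only: diff_ge_0_iff_ge) (intro sum_mono mult_left_mono drift, auto)
  also have "\<dots> = - (\<Sum>m\<in>S. \<nu> m * V m) + K"
  proof -
    have "(\<Sum>m\<in>S. \<nu> m * (- V m + K)) = (\<Sum>m\<in>S. - (\<nu> m * V m) + K * \<nu> m)"
      by (rule sum.cong) (auto simp: algebra_simps)
    also have "\<dots> = - (\<Sum>m\<in>S. \<nu> m * V m) + K * (\<Sum>m\<in>S. \<nu> m)"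
      by (simp only: sum.distrib sum_negf sum_distrib_left)
    finally show ?thesis using zero dist unfolding is_distr_def by simp
  qed
  finally have EV: "(\<Sum>m\<in>S. \<nu> m * V m) \<le> K" by simp
  have sq1: "sq_dev C \<pi> N m \<le> V m" if "m \<in> S" for m
    using VV_sq_dev(1)[of m C N \<pi>] N \<pi>0 that unfolding S_def V_def by blast
  have "expect S \<nu> (sq_dev C \<pi> N) \<le> (\<Sum>m\<in>S. \<nu> m * V m)"
    unfolding expect_def using dist unfolding is_distr_def by (intro sum_mono mult_left_mono sq1) auto
  with EV show ?thesis unfolding S_def K_def by simp
qed

lemma eventually_good:
  assumes \<sigma>: "\<sigma> > 0"
  shows "eventually (\<lambda>N. N \<ge> 1 \<and> lam \<sigma> \<beta> N > 0) sequentially"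
proof -
  define N0 where "N0 = nat \<lceil>(\<bar>\<beta>\<bar> / \<sigma>)^2\<rceil> + 1"
  have "N \<ge> 1 \<and> lam \<sigma> \<beta> N > 0" if N: "N \<ge> N0" for N
  proof -
    have "real N \<ge> real N0" using N by simp
    moreover have "real N0 > (\<bar>\<beta>\<bar> / \<sigma>)^2" unfolding N0_def by linarith
    ultimately have "(\<bar>\<beta>\<bar> / \<sigma>)^2 < real N" by linarith
    hence "\<bar>\<beta>\<bar> / \<sigma> < sqrt (real N)" by (intro real_less_rsqrt)
    hence s: "\<bar>\<beta>\<bar> < \<sigma> * sqrt (real N)" using \<sigma> by (simp add: divide_less_eq mult.commute)
    have N1: "N \<ge> 1" using N unfolding N0_def by simp
    hence sp: "sqrt (real N) > 0" by simp
    have "\<beta> / sqrt (real N) \<le> \<bar>\<beta>\<bar> / sqrt (real N)" using sp by (intro divide_right_mono) auto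
    also have "\<dots> < \<sigma>" using s sp by (simp add: divide_less_eq)
    finally show ?thesis using N1 unfolding lam_def by simp
  qed
  thus ?thesis unfolding eventually_sequentially by blast
qed

theorem mainTheorem5:
  fixes C d :: nat and \<sigma> \<beta> :: real and \<pi> :: "nat \<Rightarrow> real"
  assumes C: "C \<ge> 1" and d: "d \<ge> 1" and \<sigma>: "\<sigma> > 0"
    and \<pi>0: "\<pi> 0 = 1"
    and \<pi>mono: "\<forall>n<C. \<pi> (Suc n) \<le> \<pi> n"
    and \<pi>nonneg: "\<pi> C \<ge> 0"
    and \<pi>top: "\<pi> (Suc C) = 0"
    and \<pi>fix: "\<forall>n\<in>{1..C}. \<sigma> * (\<pi> (n - 1) ^ d - \<pi> n ^ d) = real n * (\<pi> n - \<pi> (Suc n))"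
  shows
    "(\<forall>(\<mu> :: nat \<Rightarrow> (nat \<Rightarrow> nat) \<Rightarrow> real) (p :: nat \<Rightarrow> real \<Rightarrow> (nat \<Rightarrow> nat) \<Rightarrow> real).
        (\<forall>N. N \<ge> 1 \<and> lam \<sigma> \<beta> N > 0 \<longrightarrow>
               is_distr (states C N) (\<mu> N) \<and> law_process C d \<sigma> \<beta> N (\<mu> N) (p N)) \<and>
        limsup (\<lambda>N. ereal (expect (states C N) (p N 0) (sq_dev C \<pi> N))) < \<infinity>
        \<longrightarrow> limsup (\<lambda>N. SUP t\<in>{0..}. ereal (expect (states C N) (p N t) (sq_dev C \<pi> N))) < \<infinity>)
     \<and>
     (\<forall>\<nu> :: nat \<Rightarrow> (nat \<Rightarrow> nat) \<Rightarrow> real.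
        (\<forall>N. N \<ge> 1 \<and> lam \<sigma> \<beta> N > 0 \<longrightarrow> stationary C d \<sigma> \<beta> N (\<nu> N))
        \<longrightarrow> limsup (\<lambda>N. ereal (expect (states C N) (\<nu> N) (sq_dev C \<pi> N))) < \<infinity>)"
proof (intro conjI allI impI; (elim conjE)?)
  fix \<mu> :: "nat \<Rightarrow> (nat \<Rightarrow> nat) \<Rightarrow> real" and p :: "nat \<Rightarrow> real \<Rightarrow> (nat \<Rightarrow> nat) \<Rightarrow> real"
  assume H: "\<forall>N. N \<ge> 1 \<and> lam \<sigma> \<beta> N > 0 \<longrightarrow>
               is_distr (states C N) (\<mu> N) \<and> law_process C d \<sigma> \<beta> N (\<mu> N) (p N)"
    and L0: "limsup (\<lambda>N. ereal (expect (states C N) (p N 0) (sq_dev C \<pi> N))) < \<infinity>"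
  define E0 where "E0 N = expect (states C N) (p N 0) (sq_dev C \<pi> N)" for N
  obtain c :: nat where c: "limsup (\<lambda>N. ereal (E0 N)) < ereal (real c)"
    using L0 less_PInf_Ex_of_nat unfolding E0_def by auto
  have ev: "eventually (\<lambda>N. ereal (E0 N) < ereal (real c)) sequentially"
    by (rule Limsup_lessD[OF c])
  define B where "B = max (real C * real c + (real C)^2) (Kc C d \<sigma> \<beta>)"
  have "eventually (\<lambda>N. (SUP t\<in>{0..}. ereal (expect (states C N) (p N t) (sq_dev C \<pi> N))) \<le> ereal B) sequentially"
    using ev eventually_good[OF \<sigma>, of \<beta>]
  proof eventually_elim
    case (elim N)
    hence N: "N \<ge> 1" and lam: "lam \<sigma> \<beta> N > 0" and e0: "E0 N < real c" by auto
    have HN: "is_distr (states C N) (\<mu> N)" "law_process C d \<sigma> \<beta> N (\<mu> N) (p N)" using H N lam by auto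
    have p0: "p N 0 = \<mu> N" using HN(2) unfolding law_process_def by simp
    show ?case
    proof (rule SUP_least)
      fix t :: real assume "t \<in> {0..}"
      hence t: "t \<ge> 0" by simp
      have "expect (states C N) (p N t) (sq_dev C \<pi> N)
          \<le> max (real C * E0 N + (real C)^2) (Kc C d \<sigma> \<beta>)"
        using law_bound[OF C d \<sigma> N lam \<pi>0 \<pi>mono \<pi>nonneg \<pi>top \<pi>fix HN t] unfolding E0_def p0 .
      also have "\<dots> \<le> B" unfolding B_def using e0 by (intro max.mono add_right_mono mult_left_mono) auto
      finally show "ereal (expect (states C N) (p N t) (sq_dev C \<pi> N)) \<le> ereal B" by simp
    qed
  qed
  hence "limsup (\<lambda>N. SUP t\<in>{0..}. ereal (expect (states C N) (p N t) (sq_dev C \<pi> N))) \<le> ereal B"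
    by (rule Limsup_bounded)
  also have "ereal B < \<infinity>" by simp
  finally show "limsup (\<lambda>N. SUP t\<in>{0..}. ereal (expect (states C N) (p N t) (sq_dev C \<pi> N))) < \<infinity>" .
next
  fix \<nu> :: "nat \<Rightarrow> (nat \<Rightarrow> nat) \<Rightarrow> real"
  assume H: "\<forall>N. N \<ge> 1 \<and> lam \<sigma> \<beta> N > 0 \<longrightarrow> stationary C d \<sigma> \<beta> N (\<nu> N)"
  have "eventually (\<lambda>N. ereal (expect (states C N) (\<nu> N) (sq_dev C \<pi> N)) \<le> ereal (Kc C d \<sigma> \<beta>)) sequentially"
    using eventually_good[OF \<sigma>, of \<beta>]
  proof eventually_elim
    case (elim N)
    thus ?case using stat_bound[OF C d \<sigma> _ _ \<pi>0 \<pi>mono \<pi>nonneg \<pi>top \<pi>fix, of N \<beta> "\<nu> N"] H by auto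
  qed
  hence "limsup (\<lambda>N. ereal (expect (states C N) (\<nu> N) (sq_dev C \<pi> N))) \<le> ereal (Kc C d \<sigma> \<beta>)"
    by (rule Limsup_bounded)
  also have "ereal (Kc C d \<sigma> \<beta>) < \<infinity>" by simp
  finally show "limsup (\<lambda>N. ereal (expect (states C N) (\<nu> N) (sq_dev C \<pi> N))) < \<infinity>" .
qed

end
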